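(* Consider the 2-node network game with $\pi^M=W_{con}$, $a_1=a_2=a>0$, $c_1=c_2=c>0$, $b_1>b_2>0$, and line capacity $f_{12}\ge a/(b_2+2c)$ (possibly $f_{12}=\infty$). Then the following triple is a GNE: $$q_2^*=r^*=\frac{a}{b_2+2c},\qquad q_1^*=\begin{cases}\dfrac{a(2c+b_2-b_1)}{2(b_1+c)(b_2+2c)}, & \text{if } b_1<b_2+2c,\\[2mm] 0, & \text{otherwise}.\end{cases}$$
   Context: 2-node network game. There are generators $G_1,G_2$. Generator $k$ chooses $q_k\ge 0$ and has profit $\pi^G_k=q_kp_k(q_k+r_k)-c_kq_k^2$, where $p_k(d)=a_k-b_kd$. The market maker chooses $r\in\mathbb{R}$ and sets $r_1=r$, $r_2=-r$, subject to $-q_1\le r\le q_2$ and $-f_{12}\le r\le f_{12}$. Consumer surplus objective. The market maker maximizes $$W_{con}(q,r)=\sum_k\Big(\int_0^{q_k+r_k}p_k(w)dw-(q_k+r_k)p_k(q_k+r_k)\Big).$$ GNE. A triple $(q_1^*,q_2^*,r^* )$ with $r^*$ feasible given $q^*$ is a GNE if both of the following hold: - each $q_k^*$ maximizes $\pi^G_k$ over $q_k\ge0$, given the other generator's quantity and $r^*$; - $r^*$ maximizes $W_{con}(q^*,\cdot)$ over the feasible set determined by $q^*$. *)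

theory Defs
  imports "HOL-Analysis.Analysis" "HOL-Library.Extended_Real"
begin

definition price :: "(nat \<Rightarrow> real) \<Rightarrow> (nat \<Rightarrow> real) \<Rightarrow> nat \<Rightarrow> real \<Rightarrow> real" where
  "price a b k d = a k - b k * d"

definition rflow :: "real \<Rightarrow> nat \<Rightarrow> real" where
  "rflow r k = (if k = 1 then r else - r)"

definition gen_profit ::
  "(nat \<Rightarrow> real) \<Rightarrow> (nat \<Rightarrow> real) \<Rightarrow> (nat \<Rightarrow> real) \<Rightarrow> nat \<Rightarrow> real \<Rightarrow> real \<Rightarrow> real" where
  "gen_profit a b c k qk r = qk * price a b k (qk + rflow r k) - c k * qk^2"

definition W_con ::
  "(nat \<Rightarrow> real) \<Rightarrow> (nat \<Rightarrow> real) \<Rightarrow> real \<Rightarrow> real \<Rightarrow> real \<Rightarrow> real" where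
  "W_con a b q1 q2 r =
     (\<Sum>k\<in>{1,2::nat}.
        (let d = (if k = 1 then q1 else q2) + rflow r k in
          integral {0..d} (price a b k) - d * price a b k d))"

definition feasible_r :: "ereal \<Rightarrow> real \<Rightarrow> real \<Rightarrow> real \<Rightarrow> bool" where
  "feasible_r f q1 q2 r \<longleftrightarrow> - q1 \<le> r \<and> r \<le> q2 \<and> - f \<le> ereal r \<and> ereal r \<le> f"

definition is_GNE ::
  "(nat \<Rightarrow> real) \<Rightarrow> (nat \<Rightarrow> real) \<Rightarrow> (nat \<Rightarrow> real) \<Rightarrow> ereal \<Rightarrow> real \<Rightarrow> real \<Rightarrow> real \<Rightarrow> bool" where
  "is_GNE a b c f q1 q2 r \<longleftrightarrow>
     q1 \<ge> 0 \<and> q2 \<ge> 0 \<and> feasible_r f q1 q2 r \<and>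
     (\<forall>x\<ge>0. gen_profit a b c 1 x r \<le> gen_profit a b c 1 q1 r) \<and>
     (\<forall>x\<ge>0. gen_profit a b c 2 x r \<le> gen_profit a b c 2 q2 r) \<and>
     (\<forall>r'. feasible_r f q1 q2 r' \<longrightarrow> W_con a b q1 q2 r' \<le> W_con a b q1 q2 r)"

end

theory Submission
  imports Defs
begin

lemma surplus_eq:
  fixes d :: real
  assumes "d \<ge> 0"
  shows "integral {0..d} (price a b k) - d * price a b k d = b k * d^2 / 2"
proof -
  have "((\<lambda>w. a k - b k * w) has_integral (d * a k - b k * ((d^2 - 0^2)/2))) {0..d}"
    apply (rule has_integral_diff)
    using has_integral_const_real[of "a k" 0 d] assms apply simp
    apply (rule has_integral_mult_right)
    using ident_has_integral[OF assms] by simp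
  then have "integral {0..d} (price a b k) = d * a k - b k * (d^2/2)"
    unfolding price_def by (simp add: integral_unique)
  then show ?thesis unfolding price_def by (simp add: power2_eq_square algebra_simps)
qed

theorem mainTheorem5:
  fixes a b c :: "nat \<Rightarrow> real" and A C :: real and f :: ereal
  assumes "A > 0" and "C > 0"
    and "a 1 = A" and "a 2 = A" and "c 1 = C" and "c 2 = C"
    and "b 1 > b 2" and "b 2 > 0"
    and "f \<ge> ereal (A / (b 2 + 2 * C))"
  shows "is_GNE a b c f
           (if b 1 < b 2 + 2 * C
            then A * (2 * C + b 2 - b 1) / (2 * (b 1 + C) * (b 2 + 2 * C)) else 0)
           (A / (b 2 + 2 * C))
           (A / (b 2 + 2 * C))"
proof -
  define s where "s = A / (b 2 + 2 * C)"
  define q1 where "q1 = (if b 1 < b 2 + 2 * C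
            then A * (2 * C + b 2 - b 1) / (2 * (b 1 + C) * (b 2 + 2 * C)) else 0)"
  have pos: "b 2 + 2 * C > 0" using assms by simp
  have As: "A = s * (b 2 + 2 * C)" unfolding s_def using pos by simp
  have s0: "s > 0" unfolding s_def using assms pos by simp
  have q1eq: "q1 = (if b 1 < b 2 + 2 * C then s * (b 2 + 2 * C - b 1) / (2 * (b 1 + C)) else 0)"
    unfolding q1_def s_def using pos assms by (auto simp: field_simps)
  have q10: "q1 \<ge> 0" unfolding q1eq using assms s0 by (auto intro!: divide_nonneg_pos)
  have q1s: "q1 \<le> s"
  proof (cases "b 1 < b 2 + 2 * C")
    case True
    have "s * (b 2 + 2 * C - b 1) \<le> s * (2 * (b 1 + C))"
      using s0 assms by (intro mult_left_mono) auto
    then show ?thesis unfolding q1eq using True assms by (simp add: divide_le_eq)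
  qed (use q1eq s0 in auto)
  have g2: "\<forall>x\<ge>0. gen_profit a b c 2 x s \<le> gen_profit a b c 2 s s"
  proof (intro allI impI)
    fix x :: real
    have "gen_profit a b c 2 s s - gen_profit a b c 2 x s = (b 2 + C) * (x - s)^2"
      unfolding gen_profit_def price_def rflow_def using assms As
      by (simp add: power2_eq_square algebra_simps)
    moreover have "(b 2 + C) * (x - s)^2 \<ge> 0" using assms by simp
    ultimately show "gen_profit a b c 2 x s \<le> gen_profit a b c 2 s s" by linarith
  qed
  have g1: "\<forall>x\<ge>0. gen_profit a b c 1 x s \<le> gen_profit a b c 1 q1 s"
  proof (intro allI impI)
    fix x :: real assume x0: "x \<ge> 0"
    have gp: "gen_profit a b c 1 y s = y * (s * (b 2 + 2 * C - b 1)) - (b 1 + C) * y^2" for y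
      unfolding gen_profit_def price_def rflow_def using assms As
      by (simp add: power2_eq_square algebra_simps)
    show "gen_profit a b c 1 x s \<le> gen_profit a b c 1 q1 s"
    proof (cases "b 1 < b 2 + 2 * C")
      case True
      define m where "m = s * (b 2 + 2 * C - b 1)"
      have bc: "b 1 + C > 0" using assms by simp
      have q: "q1 = m / (2 * (b 1 + C))" using True unfolding q1eq m_def by simp
      have m2: "m = 2 * (b 1 + C) * q1" unfolding q using bc by simp
      have "gen_profit a b c 1 q1 s - gen_profit a b c 1 x s = (b 1 + C) * (x - q1)^2"
        unfolding gp m_def[symmetric] m2 by (simp add: power2_eq_square algebra_simps)
      moreover have "(b 1 + C) * (x - q1)^2 \<ge> 0" using bc by simp
      ultimately show ?thesis by linarith
    next
      case False
      have "x * (s * (b 2 + 2 * C - b 1)) \<le> 0"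
        using x0 s0 False by (simp add: mult_nonneg_nonpos)
      moreover have "(b 1 + C) * x^2 \<ge> 0" using assms by simp
      ultimately show ?thesis unfolding gp using False q1eq by simp
    qed
  qed
  have fs: "ereal s \<le> f" using assms(9) unfolding s_def .
  have f0: "0 \<le> f" using fs s0 by (meson ereal_less_eq(5) less_imp_le order_trans)
  have "- f \<le> 0" using f0 by simp
  also have "0 \<le> ereal s" using s0 by simp
  finally have mfs: "- f \<le> ereal s" .
  have feas: "feasible_r f q1 s s"
    unfolding feasible_r_def using q10 s0 fs mfs by auto
  have W: "W_con a b q1 s r' \<le> W_con a b q1 s s" if fr: "feasible_r f q1 s r'" for r'
  proof -
    have r1: "- q1 \<le> r'" and r2: "r' \<le> s" using fr unfolding feasible_r_def by auto
    define d where "d = q1 + r'"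
    define T where "T = q1 + s"
    have d0: "d \<ge> 0" and dT: "d \<le> T" using r1 r2 unfolding d_def T_def by auto
    have Wr: "W_con a b q1 s r = b 1 * (q1 + r)^2 / 2 + b 2 * (s - r)^2 / 2"
      if "- q1 \<le> r" "r \<le> s" for r
    proof -
      have "W_con a b q1 s r = (integral {0..q1 + r} (price a b 1) - (q1 + r) * price a b 1 (q1 + r))
         + (integral {0..s + - r} (price a b 2) - (s + - r) * price a b 2 (s + - r))"
        unfolding W_con_def rflow_def by (simp add: Let_def)
      also have "\<dots> = b 1 * (q1 + r)^2 / 2 + b 2 * (s + - r)^2 / 2"
        using that by (simp add: surplus_eq)
      finally show ?thesis by simp
    qed
    have e1: "W_con a b q1 s r' = b 1 * d^2 / 2 + b 2 * (T - d)^2 / 2"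
      using Wr[OF r1 r2] unfolding d_def T_def by (simp add: algebra_simps)
    have e2: "W_con a b q1 s s = b 1 * T^2 / 2"
      using Wr[of s] q10 s0 unfolding T_def by simp
    have "b 1 * d^2 \<le> b 1 * (d * T)"
      using d0 dT assms by (intro mult_left_mono) (auto simp: power2_eq_square intro: mult_left_mono)
    moreover have "b 2 * (T - d)^2 \<le> b 1 * ((T - d) * T)"
    proof -
      have "b 2 * (T - d)^2 \<le> b 2 * ((T - d) * T)"
        using d0 dT assms by (intro mult_left_mono) (auto simp: power2_eq_square intro: mult_left_mono)
      also have "\<dots> \<le> b 1 * ((T - d) * T)"
        using d0 dT assms by (intro mult_right_mono) auto
      finally show ?thesis .
    qed
    ultimately have "b 1 * d^2 + b 2 * (T - d)^2 \<le> b 1 * T^2"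
      by (simp add: power2_eq_square algebra_simps)
    then show ?thesis unfolding e1 e2 by simp
  qed
  show ?thesis
    unfolding q1_def[symmetric] s_def[symmetric] is_GNE_def
    using q10 s0 feas g1 g2 W by auto
qed

end
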